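(* Let $\mathcal S$ be a trajectory set with $\mathcal M_0\neq\emptyset$. Then $\bar\sigma(0)\ge0$, and for every financial position $f:\mathcal S\to[-\infty,+\infty]$, $$\sup_{Q\in\mathcal M_0}E_Q^*[f]\le\bar\sigma(f)\le\|f\|.$$ Moreover, for every $Q\in\mathcal M_0$ one has $\mathcal L^1_{(K)}\subseteq\mathcal L^1(\mathcal S,\bar{\mathfrak A}_Q,Q)$ and $\int_{(K)}f=E_Q[f]$ for every $f\in\mathcal L^1_{(K)}$.
   Context: Fix $s_0\in\mathbb R$. A trajectory set is any set $\mathcal S$ of real sequences $S=(S_j)_{j\in\mathbb N_0}$ with $S_0=s_0$. A simple portfolio $(V,n,H)$ consists of $V\in\mathbb R$, $n\in\mathbb N$ and nonanticipating $H_i:\mathcal S\to\mathbb R$, $0\le i\le n-1$ (i.e. $H_i(S)=h_i(S_0,\dots,S_i)$ for arbitrary, not necessarily measurable, $h_i:\mathbb R^{i+1}\to\mathbb R$), with wealth $\Pi^{V,n,H}_j(S)=V+\sum_{i=0}^{\min\{j,n\}-1}H_i(S)(S_{i+1}-S_i)$ and $\Pi^{V,n,H}_\infty:=\Pi^{V,n,H}_n$; positive if $V\ge0$ and $\Pi^{V,n,H}_\infty\ge0$ on $\mathcal S$. A generalized portfolio is a sequence $(V_m,n_m,H_m)_{m\in\mathbb N_0}$ of simple portfolios, positive for $m\ge1$; positive generalized if moreover $\Pi^{V_0,n_0,H_0}_j\equiv0$ for all $j$. It superhedges $f:\mathcal S\to[-\infty,+\infty]$ with initial endowment $\sum_{m=0}^\infty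 V_m$ if $f\le\sum_{m=0}^\infty\Pi^{V_m,n_m,H_m}_\infty$ on $\mathcal S$. For $f\ge0$, $\bar I(f)$ is the infimum of initial endowments of positive generalized portfolios superhedging $f$; $\bar\sigma(f)$ is the infimum of initial endowments of generalized portfolios superhedging $f$; $\|f\|:=\bar I(|f|)$. Let $\mathcal L^1_{(K)}$ be the set of real-valued $f$ with $-\bar\sigma(-f)=\bar\sigma(f)\in\mathbb R$, and $\int_{(K)}f:=\bar\sigma(f)$ for such $f$. Let $\mathfrak A$ be the trace on $\mathcal S$ of the product Borel $\sigma$-field of $\mathbb R^{\mathbb N_0}$, $T_i(S)=S_i$ the coordinate process, and $\mathcal F_i=\sigma(T_0,\dots,T_i)$. A martingale measure is a probability $Q$ on $(\mathcal S,\mathfrak A)$ under which $(T_i)_{i\ge0}$ is a martingale w.r.t. $(\mathcal F_i)$. It has finite support at finite maturities if there is $\mathcal S'\in\mathfrak A$ with $Q(\mathcal S')=1$ such that for every $j\in\mathbb N_0$ the set of nodes $\{\mathcal S_{(S,j)}:S\in\mathcal S'\}$ is finite, where $\mathcal S_{(S,j)}=\{\tilde S\in\mathcal S:(\tilde S_0,\dots,\tilde S_j)=(S_0,\dots,S_j)\}$. $\mathcal M_0$ is the set of such martingale measures. $\bar{\mathfrak A}_Q$ is the $Q$-completion of $\mathfrak A$, $E_Q$ the expectation, and $E_Q^*[f]=\inf\{E_Q[h]: h\ \bar{\mathfrak A}_Q\text{-measurable},\ f\le h\text{ on }\mathcal S,\ E_Q[h]\text{ exists in }[-\infty,+\infty]\}$.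 *)

theory Defs
  imports "HOL-Probability.Probability"
begin

type_synonym traj = "nat \<Rightarrow> real"

definition wealth :: "real \<Rightarrow> nat \<Rightarrow> (nat \<Rightarrow> traj \<Rightarrow> real) \<Rightarrow> nat \<Rightarrow> traj \<Rightarrow> real" where
  "wealth V n H j S = V + (\<Sum>i<min j n. H i S * (S (Suc i) - S i))"

definition wealth_inf :: "real \<Rightarrow> nat \<Rightarrow> (nat \<Rightarrow> traj \<Rightarrow> real) \<Rightarrow> traj \<Rightarrow> real" where
  "wealth_inf V n H S = wealth V n H n S"

definition nonanticipating :: "traj set \<Rightarrow> nat \<Rightarrow> (nat \<Rightarrow> traj \<Rightarrow> real) \<Rightarrow> bool" where
  "nonanticipating TS n H \<longleftrightarrow>
     (\<forall>i<n. \<forall>S\<in>TS. \<forall>S'\<in>TS. (\<forall>k\<le>i. S k = S' k) \<longrightarrow> H i S = H i S')"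

definition simple_portfolio :: "traj set \<Rightarrow> real \<Rightarrow> nat \<Rightarrow> (nat \<Rightarrow> traj \<Rightarrow> real) \<Rightarrow> bool" where
  "simple_portfolio TS V n H \<longleftrightarrow> n \<ge> 1 \<and> nonanticipating TS n H"

definition positive_sp :: "traj set \<Rightarrow> real \<Rightarrow> nat \<Rightarrow> (nat \<Rightarrow> traj \<Rightarrow> real) \<Rightarrow> bool" where
  "positive_sp TS V n H \<longleftrightarrow> V \<ge> 0 \<and> (\<forall>S\<in>TS. wealth_inf V n H S \<ge> 0)"

definition gen_portfolio ::
  "traj set \<Rightarrow> (nat \<Rightarrow> real) \<Rightarrow> (nat \<Rightarrow> nat) \<Rightarrow> (nat \<Rightarrow> nat \<Rightarrow> traj \<Rightarrow> real) \<Rightarrow> bool" where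
  "gen_portfolio TS V N H \<longleftrightarrow>
     (\<forall>m. simple_portfolio TS (V m) (N m) (H m)) \<and>
     (\<forall>m\<ge>1. positive_sp TS (V m) (N m) (H m))"

definition pos_gen_portfolio ::
  "traj set \<Rightarrow> (nat \<Rightarrow> real) \<Rightarrow> (nat \<Rightarrow> nat) \<Rightarrow> (nat \<Rightarrow> nat \<Rightarrow> traj \<Rightarrow> real) \<Rightarrow> bool" where
  "pos_gen_portfolio TS V N H \<longleftrightarrow> gen_portfolio TS V N H \<and>
     (\<forall>j. \<forall>S\<in>TS. wealth (V 0) (N 0) (H 0) j S = 0)"

text \<open>Terminal value of a generalized portfolio; the terms for m \<ge> 1 are nonnegative on TS.\<close>
definition gp_value ::
  "(nat \<Rightarrow> real) \<Rightarrow> (nat \<Rightarrow> nat) \<Rightarrow> (nat \<Rightarrow> nat \<Rightarrow> traj \<Rightarrow> real) \<Rightarrow> traj \<Rightarrow> ereal" where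
  "gp_value V N H S = ereal (wealth_inf (V 0) (N 0) (H 0) S)
      + (\<Sum>m. ereal (wealth_inf (V (Suc m)) (N (Suc m)) (H (Suc m)) S))"

definition endowment :: "(nat \<Rightarrow> real) \<Rightarrow> ereal" where
  "endowment V = ereal (V 0) + (\<Sum>m. ereal (V (Suc m)))"

definition superhedges ::
  "traj set \<Rightarrow> (nat \<Rightarrow> real) \<Rightarrow> (nat \<Rightarrow> nat) \<Rightarrow> (nat \<Rightarrow> nat \<Rightarrow> traj \<Rightarrow> real) \<Rightarrow> (traj \<Rightarrow> ereal) \<Rightarrow> bool" where
  "superhedges TS V N H f \<longleftrightarrow> (\<forall>S\<in>TS. f S \<le> gp_value V N H S)"

definition sigma_bar :: "traj set \<Rightarrow> (traj \<Rightarrow> ereal) \<Rightarrow> ereal" where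
  "sigma_bar TS f = Inf {endowment V | V N H. gen_portfolio TS V N H \<and> superhedges TS V N H f}"

definition I_bar :: "traj set \<Rightarrow> (traj \<Rightarrow> ereal) \<Rightarrow> ereal" where
  "I_bar TS f = Inf {endowment V | V N H. pos_gen_portfolio TS V N H \<and> superhedges TS V N H f}"

definition normK :: "traj set \<Rightarrow> (traj \<Rightarrow> ereal) \<Rightarrow> ereal" where
  "normK TS f = I_bar TS (\<lambda>S. \<bar>f S\<bar>)"

definition L1K :: "traj set \<Rightarrow> (traj \<Rightarrow> real) set" where
  "L1K TS = {f. - sigma_bar TS (\<lambda>S. - ereal (f S)) = sigma_bar TS (\<lambda>S. ereal (f S))
                \<and> \<bar>sigma_bar TS (\<lambda>S. ereal (f S))\<bar> \<noteq> \<infinity>}"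

definition intK :: "traj set \<Rightarrow> (traj \<Rightarrow> real) \<Rightarrow> ereal" where
  "intK TS f = sigma_bar TS (\<lambda>S. ereal (f S))"

definition A_meas :: "traj set \<Rightarrow> traj measure" where
  "A_meas TS = restrict_space (Pi\<^sub>M UNIV (\<lambda>_::nat. (borel :: real measure))) TS"

definition filtr :: "traj set \<Rightarrow> nat \<Rightarrow> traj set set" where
  "filtr TS i = sigma_sets TS {{S\<in>TS. S k \<in> B} | k B. k \<le> i \<and> B \<in> sets (borel :: real measure)}"

definition martingale_measure :: "traj set \<Rightarrow> traj measure \<Rightarrow> bool" where
  "martingale_measure TS Q \<longleftrightarrow> prob_space Q \<and> sets Q = sets (A_meas TS) \<and> space Q = TS \<and>
     (\<forall>i. integrable Q (\<lambda>S. S i)) \<and>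
     (\<forall>i. \<forall>A\<in>filtr TS i. (\<integral>S. indicator A S * S (Suc i) \<partial>Q) = (\<integral>S. indicator A S * S i \<partial>Q))"

definition node :: "traj set \<Rightarrow> traj \<Rightarrow> nat \<Rightarrow> traj set" where
  "node TS S j = {S'\<in>TS. \<forall>k\<le>j. S' k = S k}"

definition finite_support :: "traj set \<Rightarrow> traj measure \<Rightarrow> bool" where
  "finite_support TS Q \<longleftrightarrow> (\<exists>TS'\<in>sets Q. emeasure Q TS' = 1 \<and>
      (\<forall>j. finite ((\<lambda>S. node TS S j) ` TS')))"

definition M0 :: "traj set \<Rightarrow> traj measure set" where
  "M0 TS = {Q. martingale_measure TS Q \<and> finite_support TS Q}"

definition Epos :: "'a measure \<Rightarrow> ('a \<Rightarrow> ereal) \<Rightarrow> ennreal" where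
  "Epos M h = (\<integral>\<^sup>+x. e2ennreal (max 0 (h x)) \<partial>M)"

definition Eneg :: "'a measure \<Rightarrow> ('a \<Rightarrow> ereal) \<Rightarrow> ennreal" where
  "Eneg M h = (\<integral>\<^sup>+x. e2ennreal (max 0 (- h x)) \<partial>M)"

definition E_exists :: "'a measure \<Rightarrow> ('a \<Rightarrow> ereal) \<Rightarrow> bool" where
  "E_exists M h \<longleftrightarrow> Epos M h \<noteq> \<infinity> \<or> Eneg M h \<noteq> \<infinity>"

definition E_ext :: "'a measure \<Rightarrow> ('a \<Rightarrow> ereal) \<Rightarrow> ereal" where
  "E_ext M h = enn2ereal (Epos M h) - enn2ereal (Eneg M h)"

definition outer_exp :: "traj set \<Rightarrow> traj measure \<Rightarrow> (traj \<Rightarrow> ereal) \<Rightarrow> ereal" where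
  "outer_exp TS Q f = Inf {E_ext (completion Q) h | h.
      h \<in> borel_measurable (completion Q) \<and> (\<forall>S\<in>TS. f S \<le> h S) \<and> E_exists (completion Q) h}"

end

theory Submission
  imports Defs
begin

lemma E_ext_real:
  fixes g :: "'a \<Rightarrow> ereal" and r :: "'a \<Rightarrow> real"
  assumes r: "integrable M r" and ae: "AE x in M. g x = ereal (r x)"
  shows "E_exists M g \<and> E_ext M g = ereal (integral\<^sup>L M r)"
proof -
  have p: "Epos M g = (\<integral>\<^sup>+x. ennreal (r x) \<partial>M)"
    unfolding Epos_def
  proof (rule nn_integral_cong_AE)
    show "AE x in M. e2ennreal (max 0 (g x)) = ennreal (r x)"
      using ae by eventually_elim (simp add: max_def ennreal_neg)
  qed
  have n: "Eneg M g = (\<integral>\<^sup>+x. ennreal (- r x) \<partial>M)"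
    unfolding Eneg_def
  proof (rule nn_integral_cong_AE)
    show "AE x in M. e2ennreal (max 0 (- g x)) = ennreal (- r x)"
      using ae by eventually_elim (simp add: max_def ennreal_neg)
  qed
  have f1: "(\<integral>\<^sup>+x. ennreal (r x) \<partial>M) \<noteq> \<infinity>" and f2: "(\<integral>\<^sup>+x. ennreal (- r x) \<partial>M) \<noteq> \<infinity>"
    using r by auto
  show ?thesis
    unfolding E_exists_def E_ext_def p n real_lebesgue_integral_def[OF r]
    using f1 f2
    by (cases "(\<integral>\<^sup>+x. ennreal (r x) \<partial>M)" rule: ennreal_cases;
        cases "(\<integral>\<^sup>+x. ennreal (- r x) \<partial>M)" rule: ennreal_cases) simp_all
qed

lemma E_ext_fin:
  fixes g :: "'a \<Rightarrow> ereal"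
  assumes g[measurable]: "g \<in> borel_measurable M" and p: "Epos M g \<noteq> \<infinity>" and n: "Eneg M g \<noteq> \<infinity>"
  shows "integrable M (\<lambda>x. real_of_ereal (g x)) \<and> (AE x in M. g x = ereal (real_of_ereal (g x)))"
proof
  have "AE x in M. e2ennreal (max 0 (g x)) \<noteq> \<infinity>"
    using p unfolding Epos_def by (intro nn_integral_PInf_AE) auto
  moreover have "AE x in M. e2ennreal (max 0 (- g x)) \<noteq> \<infinity>"
    using n unfolding Eneg_def by (intro nn_integral_PInf_AE) auto
  ultimately show "AE x in M. g x = ereal (real_of_ereal (g x))"
    by eventually_elim (case_tac "g x"; simp)
  have "(\<integral>\<^sup>+x. ennreal (real_of_ereal (g x)) \<partial>M) \<le> Epos M g"
    unfolding Epos_def by (intro nn_integral_mono) (case_tac "g x"; simp add: max_def ennreal_neg)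
  moreover have "(\<integral>\<^sup>+x. ennreal (- real_of_ereal (g x)) \<partial>M) \<le> Eneg M g"
    unfolding Eneg_def by (intro nn_integral_mono) (case_tac "g x"; simp add: max_def ennreal_neg)
  ultimately show "integrable M (\<lambda>x. real_of_ereal (g x))"
    unfolding real_integrable_def using p n by (auto simp: top_unique[symmetric] infinity_ennreal_def)
qed

lemma mm_facts:
  assumes "martingale_measure TS Q"
  shows "prob_space Q" "sets Q = sets (A_meas TS)" "space Q = TS"
    "\<And>i. integrable Q (\<lambda>S. S i)"
    "\<And>i A. A \<in> filtr TS i \<Longrightarrow> (\<integral>S. indicator A S * S (Suc i) \<partial>Q) = (\<integral>S. indicator A S * S i \<partial>Q)"
  using assms unfolding martingale_measure_def by auto

lemma coord_meas:
  assumes "martingale_measure TS Q"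
  shows "(\<lambda>S. S i) \<in> borel_measurable Q"
proof -
  have "(\<lambda>S::traj. S i) \<in> borel_measurable (A_meas TS)"
    unfolding A_meas_def
    by (intro measurable_restrict_space1 measurable_component_singleton) simp
  then show ?thesis
    using mm_facts(2)[OF assms] measurable_cong_sets by blast
qed

lemma node_sets:
  assumes "martingale_measure TS Q"
  shows "node TS S j \<in> sets Q"
proof -
  note [measurable] = coord_meas[OF assms]
  have "{x\<in>space Q. \<forall>k\<le>j. x k = S k} \<in> sets Q" by measurable
  moreover have "node TS S j = {x\<in>space Q. \<forall>k\<le>j. x k = S k}"
    using mm_facts(3)[OF assms] unfolding node_def by auto
  ultimately show ?thesis by simp
qed

lemma node_filtr: "node TS S j \<in> filtr TS j"
proof -
  let ?G = "{{S\<in>TS. S k \<in> B} | k B. k \<le> j \<and> B \<in> sets (borel :: real measure)}"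
  interpret sa: sigma_algebra TS "sigma_sets TS ?G"
    by (rule sigma_algebra_sigma_sets) auto
  have eq: "node TS S j = (\<Inter>k\<in>{..j}. {S'\<in>TS. S' k \<in> {S k}})"
    unfolding node_def by auto
  have "(\<Inter>k\<in>{..j}. {S'\<in>TS. S' k \<in> {S k}}) \<in> sigma_sets TS ?G"
  proof (rule sa.finite_INT)
    fix k assume k: "k \<in> {..j}"
    have b: "{S k} \<in> sets (borel :: real measure)" by simp
    show "{S' \<in> TS. S' k \<in> {S k}} \<in> sigma_sets TS ?G"
      by (rule sigma_sets.Basic) (use k b in blast)
  qed auto
  then show ?thesis unfolding filtr_def eq .
qed

lemma node_self: "S \<in> TS \<Longrightarrow> S \<in> node TS S j"
  unfolding node_def by auto

lemma node_eq: "S \<in> node TS S' j \<Longrightarrow> node TS S j = node TS S' j"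
  unfolding node_def by auto

lemma int_ind:
  fixes f :: "'a \<Rightarrow> real"
  shows "A \<in> sets M \<Longrightarrow> integrable M f \<Longrightarrow> integrable M (\<lambda>x. indicator A x * f x)"
  using integrable_real_mult_indicator[of A M f] by (simp add: mult.commute)

lemma term_G:
  assumes mm: "martingale_measure TS Q" and TS': "TS' \<in> sets Q"
    and fin: "finite ((\<lambda>S. node TS S i) ` TS')"
    and na: "\<forall>S\<in>TS. \<forall>S'\<in>TS. (\<forall>k\<le>i. S k = S' k) \<longrightarrow> h S = h S'"
  shows "\<exists>G. integrable Q G \<and> integral\<^sup>L Q G = 0 \<and> (\<forall>S\<in>TS'. G S = h S * (S (Suc i) - S i))"
proof -
  define F where "F = (\<lambda>S. node TS S i) ` TS'"
  define rep where "rep Nd = (SOME x. x \<in> Nd \<inter> TS')" for Nd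
  have sub: "TS' \<subseteq> TS" using sets.sets_into_space[OF TS'] mm_facts(3)[OF mm] by simp
  have rep: "rep Nd \<in> Nd \<inter> TS'" if "Nd \<in> F" for Nd
  proof -
    from that obtain S where "S \<in> TS'" "Nd = node TS S i" unfolding F_def by auto
    then have "S \<in> Nd \<inter> TS'" using sub node_self by blast
    then show ?thesis unfolding rep_def by (metis (mono_tags) someI)
  qed
  define G where "G S = (\<Sum>Nd\<in>F. h (rep Nd) * (indicator Nd S * S (Suc i) - indicator Nd S * S i))" for S
  have Fs: "Nd \<in> sets Q" if "Nd \<in> F" for Nd using that node_sets[OF mm] unfolding F_def by auto
  have Ff: "Nd \<in> filtr TS i" if "Nd \<in> F" for Nd using that node_filtr unfolding F_def by auto
  have int: "integrable Q G"
    unfolding G_def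
    by (auto intro!: integrable_sum integrable_mult_right integrable_diff int_ind Fs mm_facts(4)[OF mm])
  have "integral\<^sup>L Q G = (\<Sum>Nd\<in>F. integral\<^sup>L Q (\<lambda>S. h (rep Nd) * (indicator Nd S * S (Suc i) - indicator Nd S * S i)))"
    unfolding G_def
    by (rule Bochner_Integration.integral_sum) (auto intro!: integrable_mult_right integrable_diff int_ind Fs mm_facts(4)[OF mm])
  also have "\<dots> = (\<Sum>Nd\<in>F. h (rep Nd) * ((\<integral>S. indicator Nd S * S (Suc i) \<partial>Q) - (\<integral>S. indicator Nd S * S i \<partial>Q)))"
    by (intro sum.cong refl) (simp add: integral_diff int_ind Fs mm_facts(4)[OF mm])
  also have "\<dots> = 0"
    by (intro sum.neutral ballI) (simp add: mm_facts(5)[OF mm Ff])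
  finally have i0: "integral\<^sup>L Q G = 0" .
  have pw: "G S = h S * (S (Suc i) - S i)" if S: "S \<in> TS'" for S
  proof -
    let ?N = "node TS S i"
    have N: "?N \<in> F" using S unfolding F_def by auto
    have z: "h (rep Nd) * (indicator Nd S * S (Suc i) - indicator Nd S * S i) = 0" if "Nd \<in> F - {?N}" for Nd
    proof -
      from that obtain S' where "S' \<in> TS'" "Nd = node TS S' i" "Nd \<noteq> ?N" unfolding F_def by auto
      then have "S \<notin> Nd" using node_eq[of S TS S' i] by auto
      then show ?thesis by simp
    qed
    have "G S = h (rep ?N) * (indicator ?N S * S (Suc i) - indicator ?N S * S i)"
    proof -
      have "G S = h (rep ?N) * (indicator ?N S * S (Suc i) - indicator ?N S * S i)
          + (\<Sum>Nd\<in>F - {?N}. h (rep Nd) * (indicator Nd S * S (Suc i) - indicator Nd S * S i))"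
        unfolding G_def using fin N by (intro sum.remove) (auto simp: F_def)
      moreover have "(\<Sum>Nd\<in>F - {?N}. h (rep Nd) * (indicator Nd S * S (Suc i) - indicator Nd S * S i)) = 0"
        using z by (intro sum.neutral) blast
      ultimately show ?thesis by simp
    qed
    moreover have "h (rep ?N) = h S"
    proof -
      have "rep ?N \<in> ?N" using rep[OF N] by auto
      then have r: "rep ?N \<in> TS" "\<forall>k\<le>i. rep ?N k = S k" unfolding node_def by auto
      have "S \<in> TS" using S sub by blast
      then show ?thesis by (rule na[rule_format, OF r(1)]) (use r in auto)
    qed
    moreover have "S \<in> ?N" using S sub node_self by blast
    ultimately show ?thesis by (simp add: algebra_simps)
  qed
  show ?thesis by (intro exI[of _ G] conjI int i0 ballI pw)
qed

lemma port_W: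
  assumes mm: "martingale_measure TS Q" and TS': "TS' \<in> sets Q"
    and fin: "\<forall>j. finite ((\<lambda>S. node TS S j) ` TS')"
    and na: "nonanticipating TS n H"
  shows "\<exists>W. integrable Q W \<and> integral\<^sup>L Q W = V \<and> (\<forall>S\<in>TS'. W S = wealth_inf V n H S)"
proof -
  have "\<forall>i\<in>{..<n}. \<exists>G. integrable Q G \<and> integral\<^sup>L Q G = 0 \<and> (\<forall>S\<in>TS'. G S = H i S * (S (Suc i) - S i))"
  proof
    fix i assume i: "i \<in> {..<n}"
    have "\<forall>S\<in>TS. \<forall>S'\<in>TS. (\<forall>k\<le>i. S k = S' k) \<longrightarrow> H i S = H i S'"
      using na i unfolding nonanticipating_def by blast
    then show "\<exists>G. integrable Q G \<and> integral\<^sup>L Q G = 0 \<and> (\<forall>S\<in>TS'. G S = H i S * (S (Suc i) - S i))"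
      using term_G[OF mm TS'] fin by blast
  qed
  then have "\<exists>G. \<forall>i\<in>{..<n}. integrable Q (G i) \<and> integral\<^sup>L Q (G i) = 0 \<and> (\<forall>S\<in>TS'. G i S = H i S * (S (Suc i) - S i))"
    by (rule bchoice)
  then obtain G where G: "\<forall>i\<in>{..<n}. integrable Q (G i) \<and> integral\<^sup>L Q (G i) = 0 \<and> (\<forall>S\<in>TS'. G i S = H i S * (S (Suc i) - S i))"
    by (elim exE)
  interpret prob_space Q by (rule mm_facts(1)[OF mm])
  define W where "W S = V + (\<Sum>i<n. G i S)" for S
  have Gi: "\<And>i. i \<in> {..<n} \<Longrightarrow> integrable Q (G i)" using G by blast
  have G0: "\<And>i. i \<in> {..<n} \<Longrightarrow> integral\<^sup>L Q (G i) = 0" using G by blast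
  have GS: "\<And>i S. i \<in> {..<n} \<Longrightarrow> S \<in> TS' \<Longrightarrow> G i S = H i S * (S (Suc i) - S i)" using G by blast
  have "integrable Q W" unfolding W_def
    by (intro Bochner_Integration.integrable_add integrable_const Bochner_Integration.integrable_sum Gi)
  moreover have "integral\<^sup>L Q W = V"
  proof -
    have "integral\<^sup>L Q W = integral\<^sup>L Q (\<lambda>S. V) + integral\<^sup>L Q (\<lambda>S. \<Sum>i<n. G i S)" unfolding W_def
      by (rule Bochner_Integration.integral_add) (auto intro!: Bochner_Integration.integrable_sum Gi)
    also have "\<dots> = V + (\<Sum>i<n. integral\<^sup>L Q (G i))"
      by (subst Bochner_Integration.integral_sum) (auto simp: Gi prob_space)
    also have "(\<Sum>i<n. integral\<^sup>L Q (G i)) = 0"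
      by (rule sum.neutral) (simp add: G0)
    finally show ?thesis by simp
  qed
  moreover have "\<forall>S\<in>TS'. W S = wealth_inf V n H S"
  proof
    fix S assume S: "S \<in> TS'"
    show "W S = wealth_inf V n H S"
      unfolding W_def wealth_inf_def wealth_def min.idem
      by (rule arg_cong[where f="\<lambda>x. V + x"], rule sum.cong) (simp_all add: GS S)
  qed
  ultimately show ?thesis by blast
qed

lemma lemmaA:
  assumes Q: "Q \<in> M0 TS" and gp: "gen_portfolio TS V N H" and sh: "superhedges TS V N H f"
  shows "\<exists>h. h \<in> borel_measurable Q \<and> (\<forall>S\<in>TS. f S \<le> h S) \<and> E_exists Q h \<and> E_ext Q h \<le> endowment V"
proof -
  have mm: "martingale_measure TS Q" and fs: "finite_support TS Q" using Q unfolding M0_def by auto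
  obtain TS' where TS': "TS' \<in> sets Q" and m1: "emeasure Q TS' = 1"
    and fin: "\<forall>j. finite ((\<lambda>S. node TS S j) ` TS')"
    using fs unfolding finite_support_def by blast
  interpret prob_space Q by (rule mm_facts(1)[OF mm])
  have spQ: "space Q = TS" by (rule mm_facts(3)[OF mm])
  have sub: "TS' \<subseteq> TS" using sets.sets_into_space[OF TS'] spQ by simp
  have aeT: "AE S in Q. S \<in> TS'"
    by (rule AE_prob_1) (simp add: measure_def m1)
  have "\<forall>m. \<exists>W. integrable Q W \<and> integral\<^sup>L Q W = V m \<and> (\<forall>S\<in>TS'. W S = wealth_inf (V m) (N m) (H m) S)"
  proof
    fix m
    have "nonanticipating TS (N m) (H m)" using gp unfolding gen_portfolio_def simple_portfolio_def by blast
    then show "\<exists>W. integrable Q W \<and> integral\<^sup>L Q W = V m \<and> (\<forall>S\<in>TS'. W S = wealth_inf (V m) (N m) (H m) S)"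
      by (rule port_W[OF mm TS' fin])
  qed
  then have "\<exists>W. \<forall>m. integrable Q (W m) \<and> integral\<^sup>L Q (W m) = V m \<and> (\<forall>S\<in>TS'. W m S = wealth_inf (V m) (N m) (H m) S)"
    by (rule choice)
  then obtain W where W: "\<forall>m. integrable Q (W m) \<and> integral\<^sup>L Q (W m) = V m \<and> (\<forall>S\<in>TS'. W m S = wealth_inf (V m) (N m) (H m) S)"
    by (elim exE)
  have Wi: "\<And>m. integrable Q (W m)" using W by blast
  have Wint: "\<And>m. integral\<^sup>L Q (W m) = V m" using W by blast
  have WS: "\<And>m S. S \<in> TS' \<Longrightarrow> W m S = wealth_inf (V m) (N m) (H m) S" using W by blast
  have Wm[measurable]: "\<And>m. W m \<in> borel_measurable Q" using Wi by blast
  have posSP: "\<And>m. positive_sp TS (V (Suc m)) (N (Suc m)) (H (Suc m))"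
    using gp unfolding gen_portfolio_def by simp
  have Vpos: "\<And>m. 0 \<le> V (Suc m)" using posSP unfolding positive_sp_def by blast
  have Wpos: "\<And>m S. S \<in> TS' \<Longrightarrow> 0 \<le> W (Suc m) S"
    using posSP sub WS unfolding positive_sp_def by fastforce
  define B where "B S = (\<Sum>m. ennreal (W (Suc m) S))" for S
  have Bm[measurable]: "B \<in> borel_measurable Q" unfolding B_def by measurable
  define h where "h S = (if S \<in> TS' then ereal (W 0 S) + enn2ereal (B S) else \<infinity>)" for S
  have hm: "h \<in> borel_measurable Q"
    unfolding h_def
    by (rule measurable_If_set) (use TS' in auto)
  have gpv: "gp_value V N H S = ereal (W 0 S) + enn2ereal (B S)" if S: "S \<in> TS'" for S
  proof -
    have "(\<Sum>m. ereal (wealth_inf (V (Suc m)) (N (Suc m)) (H (Suc m)) S)) = (\<Sum>m. enn2ereal (ennreal (W (Suc m) S)))"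
      using WS[OF S] Wpos[OF S] by (intro suminf_cong) simp
    also have "\<dots> = enn2ereal (B S)" unfolding B_def by (rule suminf_enn2ereal)
    finally show ?thesis unfolding gp_value_def using WS[OF S] by simp
  qed
  have hf: "\<forall>S\<in>TS. f S \<le> h S"
  proof
    fix S assume "S \<in> TS"
    then have fS: "f S \<le> gp_value V N H S" using sh unfolding superhedges_def by blast
    show "f S \<le> h S"
    proof (cases "S \<in> TS'")
      case True
      then show ?thesis using fS gpv[OF True] unfolding h_def by simp
    next
      case False
      then show ?thesis unfolding h_def by simp
    qed
  qed
  have negle: "Eneg Q h \<le> (\<integral>\<^sup>+x. ennreal (- W 0 x) \<partial>Q)"
    unfolding Eneg_def
  proof (rule nn_integral_mono)
    fix x
    show "e2ennreal (max 0 (- h x)) \<le> ennreal (- W 0 x)"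
    proof (cases "x \<in> TS'")
      case True
      have "max 0 (- h x) \<le> max 0 (ereal (- W 0 x))"
        using True unfolding h_def
        by (cases "B x" rule: ennreal_cases) (auto simp: max_def)
      then have "e2ennreal (max 0 (- h x)) \<le> e2ennreal (max 0 (ereal (- W 0 x)))"
        by (rule e2ennreal_mono)
      also have "\<dots> = ennreal (- W 0 x)"
        by (simp add: max_def ennreal_neg)
      finally show ?thesis .
    next
      case False
      then show ?thesis unfolding h_def by simp
    qed
  qed
  have negfin: "Eneg Q h \<noteq> \<infinity>"
    using negle integrableD(3)[OF Wi[of 0]] by (auto simp: top_unique[symmetric] infinity_ennreal_def)
  have ex: "E_exists Q h" unfolding E_exists_def using negfin by blast
  define s where "s = (\<Sum>m. ennreal (V (Suc m)))"
  have endo: "endowment V = ereal (V 0) + enn2ereal s"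
  proof -
    have "(\<Sum>m. ereal (V (Suc m))) = (\<Sum>m. enn2ereal (ennreal (V (Suc m))))"
      using Vpos by (intro suminf_cong) simp
    also have "\<dots> = enn2ereal s" unfolding s_def by (rule suminf_enn2ereal)
    finally show ?thesis unfolding endowment_def by simp
  qed
  have intB: "(\<integral>\<^sup>+x. B x \<partial>Q) = s"
  proof -
    have "(\<integral>\<^sup>+x. B x \<partial>Q) = (\<Sum>m. (\<integral>\<^sup>+x. ennreal (W (Suc m) x) \<partial>Q))"
      unfolding B_def by (rule nn_integral_suminf) measurable
    also have "\<dots> = s"
      unfolding s_def
    proof (rule suminf_cong)
      fix m
      have "AE x in Q. 0 \<le> W (Suc m) x" using aeT by eventually_elim (rule Wpos)
      then show "(\<integral>\<^sup>+x. ennreal (W (Suc m) x) \<partial>Q) = ennreal (V (Suc m))"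
        using nn_integral_eq_integral[OF Wi] Wint by simp
    qed
    finally show ?thesis .
  qed
  have le: "E_ext Q h \<le> endowment V"
  proof (cases "s = \<infinity>")
    case True
    then show ?thesis unfolding endo by simp
  next
    case False
    have aeB: "AE x in Q. B x \<noteq> \<infinity>"
      using False intB by (intro nn_integral_PInf_AE) auto
    define r where "r x = W 0 x + enn2real (B x)" for x
    have aeBe: "AE x in Q. ennreal (enn2real (B x)) = B x"
      using aeB by eventually_elim (simp add: infinity_ennreal_def less_top)
    have iB: "integrable Q (\<lambda>x. enn2real (B x))"
    proof (rule integrableI_nonneg)
      show "(\<integral>\<^sup>+x. ennreal (enn2real (B x)) \<partial>Q) < \<infinity>"
        using nn_integral_cong_AE[OF aeBe] intB False by (simp add: less_top infinity_ennreal_def)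
    qed auto
    have ir: "integrable Q r" unfolding r_def using Wi iB by (rule Bochner_Integration.integrable_add)
    have intr: "integral\<^sup>L Q r = V 0 + enn2real s"
    proof -
      have "integral\<^sup>L Q (\<lambda>x. enn2real (B x)) = enn2real s"
        using enn2real_nn_integral_eq_integral[where f="\<lambda>x. B x" and M=Q and g="\<lambda>x. enn2real (B x)"] aeBe intB
        by (simp add: eq_commute)
      then show ?thesis unfolding r_def using Wi iB Wint by simp
    qed
    have aeh: "AE x in Q. h x = ereal (r x)"
      using aeT aeB
    proof eventually_elim
      case (elim x)
      then show ?case unfolding h_def r_def
        by (cases "B x" rule: ennreal_cases) (auto simp: infinity_ennreal_def)
    qed
    have "E_ext Q h = ereal (integral\<^sup>L Q r)" using E_ext_real[OF ir aeh] by blast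
    also have "\<dots> = endowment V" unfolding endo intr using False
      by (cases s rule: ennreal_cases) (auto simp: infinity_ennreal_def)
    finally show ?thesis by simp
  qed
  show ?thesis using hm hf ex le by blast
qed

lemma negle: "(u::ereal) \<le> a \<Longrightarrow> - u \<le> b \<Longrightarrow> - a \<le> b"
  using ereal_minus_le_minus[of a u] order.trans by blast
lemma negle2: "- (u::ereal) \<le> a \<Longrightarrow> - a \<le> u"
  by (metis ereal_minus_le_minus ereal_uminus_uminus)
lemma rle: "(a::ereal) \<le> b \<Longrightarrow> a = ereal (real_of_ereal a) \<Longrightarrow> b = ereal (real_of_ereal b) \<Longrightarrow> real_of_ereal a \<le> real_of_ereal b"
  by (metis ereal_less_eq(3))
lemma rle2: "- (a::ereal) \<le> b \<Longrightarrow> a = ereal (real_of_ereal a) \<Longrightarrow> b = ereal (real_of_ereal b) \<Longrightarrow> - real_of_ereal a \<le> real_of_ereal b"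
  by (metis ereal_less_eq(3) uminus_ereal.simps(1))
lemma rle3: "(a::ereal) \<le> ereal f \<Longrightarrow> ereal f \<le> b \<Longrightarrow> a = ereal (real_of_ereal a) \<Longrightarrow> b = ereal (real_of_ereal b) \<Longrightarrow> real_of_ereal b - real_of_ereal a = 0 \<Longrightarrow> f = real_of_ereal b"
  by (metis ereal_less_eq(3) antisym eq_iff_diff_eq_0)

lemma fin_pos:
  assumes "E_exists M h" "E_ext M h < ereal a"
  shows "Epos M h \<noteq> \<infinity>"
proof
  assume p: "Epos M h = \<infinity>"
  then have n: "Eneg M h \<noteq> \<infinity>" using assms(1) unfolding E_exists_def by blast
  have "E_ext M h = \<infinity>"
    unfolding E_ext_def p using n
    by (cases "Eneg M h" rule: ennreal_cases) (auto simp: infinity_ennreal_def)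
  then show False using assms(2) by simp
qed

lemma Epos_mono:
  assumes "\<And>x. x \<in> space M \<Longrightarrow> g x \<le> h x"
  shows "Epos M g \<le> Epos M h"
  unfolding Epos_def
  by (intro nn_integral_mono e2ennreal_mono max.mono order.refl assms)

lemma Eneg_le:
  assumes "\<And>x. x \<in> space M \<Longrightarrow> - g x \<le> h x"
  shows "Eneg M g \<le> Epos M h"
  unfolding Epos_def Eneg_def
  by (intro nn_integral_mono e2ennreal_mono max.mono order.refl assms)

lemma le_of_lt_all:
  fixes a c :: real
  assumes "\<And>n. a < c + 1 / real (Suc n)"
  shows "a \<le> c"
proof (rule ccontr)
  assume "\<not> a \<le> c"
  then have "0 < a - c" by simp
  then obtain n where "inverse (real (Suc n)) < a - c" using reals_Archimedean by blast
  then show False using assms[of n] by (simp add: field_simps inverse_eq_divide)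
qed

lemma compl_meas:
  fixes f g :: "'a \<Rightarrow> real"
  assumes g[measurable]: "g \<in> borel_measurable M" and ae: "AE x in M. f x = g x"
  shows "f \<in> borel_measurable (completion M)"
proof (rule borel_measurableI)
  fix S :: "real set" assume S: "open S"
  have A: "g -` S \<inter> space M \<in> sets M" using S by (intro measurable_sets[OF g]) auto
  have "AE x in completion M. x \<in> g -` S \<inter> space M \<longleftrightarrow> x \<in> f -` S \<inter> space (completion M)"
    by (rule AE_completion) (use ae in \<open>eventually_elim, auto\<close>)
  then show "f -` S \<inter> space (completion M) \<in> sets (completion M)"
    by (rule completion.in_sets_AE) (use A in auto)
qed

lemma to_real:
  fixes g :: "'a \<Rightarrow> ereal"
  assumes "g \<in> borel_measurable M" "Epos M g \<noteq> \<infinity>" "Eneg M g \<noteq> \<infinity>"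
  shows "integrable M (\<lambda>x. real_of_ereal (g x))" "AE x in M. g x = ereal (real_of_ereal (g x))"
    "E_ext M g = ereal (\<integral>x. real_of_ereal (g x) \<partial>M)"
proof -
  show i: "integrable M (\<lambda>x. real_of_ereal (g x))" and ae: "AE x in M. g x = ereal (real_of_ereal (g x))"
    using E_ext_fin[OF assms] by auto
  show "E_ext M g = ereal (\<integral>x. real_of_ereal (g x) \<partial>M)"
    using E_ext_real[OF i ae] by blast
qed

lemma sandwich:
  fixes f :: "'a \<Rightarrow> real" and c :: real
  assumes h1m: "\<And>n. h1 n \<in> borel_measurable M" and h2m: "\<And>n. h2 n \<in> borel_measurable M"
    and h1f: "\<And>n x. x \<in> space M \<Longrightarrow> ereal (f x) \<le> h1 n x"
    and h2f: "\<And>n x. x \<in> space M \<Longrightarrow> - ereal (f x) \<le> h2 n x"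
    and e1: "\<And>n. E_exists M (h1 n)" and e2: "\<And>n. E_exists M (h2 n)"
    and l1: "\<And>n. E_ext M (h1 n) < ereal (c + 1 / real (Suc n))"
    and l2: "\<And>n. E_ext M (h2 n) < ereal (- c + 1 / real (Suc n))"
  shows "integrable (completion M) f \<and> (\<integral>x. f x \<partial>completion M) = c"
proof -
  have p1: "\<And>n. Epos M (h1 n) \<noteq> \<infinity>" using fin_pos[OF e1 l1] .
  have p2: "\<And>n. Epos M (h2 n) \<noteq> \<infinity>" using fin_pos[OF e2 l2] .
  have n1: "Eneg M (h1 n) \<noteq> \<infinity>" for n
  proof -
    have "Eneg M (h1 n) \<le> Epos M (h2 0)"
      by (rule Eneg_le) (rule negle[OF h1f h2f])
    then show ?thesis using p2[of 0] by (auto simp: top_unique[symmetric] infinity_ennreal_def)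
  qed
  have n2: "Eneg M (h2 n) \<noteq> \<infinity>" for n
  proof -
    have "Eneg M (h2 n) \<le> Epos M (h1 0)"
      by (rule Eneg_le) (rule negle2[OF negle[OF h1f h2f]])
    then show ?thesis using p1[of 0] by (auto simp: top_unique[symmetric] infinity_ennreal_def)
  qed
  define g1 where "g1 x = (INF n. h1 n x)" for x
  define g2 where "g2 x = (SUP n. - h2 n x)" for x
  have g1m: "g1 \<in> borel_measurable M" unfolding g1_def using h1m by measurable
  have g2m: "g2 \<in> borel_measurable M" unfolding g2_def using h2m by measurable
  have g1f: "ereal (f x) \<le> g1 x" if "x \<in> space M" for x
    unfolding g1_def using h1f[OF that] by (intro INF_greatest) auto
  have g2f: "g2 x \<le> ereal (f x)" if "x \<in> space M" for x
    unfolding g2_def using h2f[OF that] by (intro SUP_least) (rule negle2)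
  have g1h: "g1 x \<le> h1 n x" for x n unfolding g1_def by (rule INF_lower) simp
  have g2h: "- h2 n x \<le> g2 x" for x n unfolding g2_def by (rule SUP_upper) simp
  have pg1: "Epos M g1 \<noteq> \<infinity>"
  proof -
    have "Epos M g1 \<le> Epos M (h1 0)" by (rule Epos_mono) (rule g1h)
    then show ?thesis using p1[of 0] by (auto simp: top_unique[symmetric] infinity_ennreal_def)
  qed
  have ng1: "Eneg M g1 \<noteq> \<infinity>"
  proof -
    have "Eneg M g1 \<le> Epos M (h2 0)"
      by (rule Eneg_le) (rule negle[OF g1f h2f])
    then show ?thesis using p2[of 0] by (auto simp: top_unique[symmetric] infinity_ennreal_def)
  qed
  have pg2: "Epos M g2 \<noteq> \<infinity>"
  proof -
    have "Epos M g2 \<le> Epos M (h1 0)" by (rule Epos_mono) (rule order.trans[OF g2f h1f])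
    then show ?thesis using p1[of 0] by (auto simp: top_unique[symmetric] infinity_ennreal_def)
  qed
  have ng2: "Eneg M g2 \<noteq> \<infinity>"
  proof -
    have "Eneg M g2 \<le> Epos M (h2 0)"
      by (rule Eneg_le) (rule negle2[OF g2h])
    then show ?thesis using p2[of 0] by (auto simp: top_unique[symmetric] infinity_ennreal_def)
  qed
  note G1 = to_real[OF g1m pg1 ng1]
  note G2 = to_real[OF g2m pg2 ng2]
  note H1 = to_real[OF h1m p1 n1]
  note H2 = to_real[OF h2m p2 n2]
  have i1: "(\<integral>x. real_of_ereal (g1 x) \<partial>M) \<le> c"
  proof (rule le_of_lt_all)
    fix n
    have "(\<integral>x. real_of_ereal (g1 x) \<partial>M) \<le> (\<integral>x. real_of_ereal (h1 n x) \<partial>M)"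
    proof (rule integral_mono_AE[OF G1(1) H1(1)])
      show "AE x in M. real_of_ereal (g1 x) \<le> real_of_ereal (h1 n x)"
        using G1(2) H1(2)[of n] by eventually_elim (rule rle[OF g1h])
    qed
    also have "\<dots> < c + 1 / real (Suc n)" using l1[of n] H1(3)[of n] by simp
    finally show "(\<integral>x. real_of_ereal (g1 x) \<partial>M) < c + 1 / real (Suc n)" .
  qed
  have i2: "- (\<integral>x. real_of_ereal (g2 x) \<partial>M) \<le> - c"
  proof (rule le_of_lt_all)
    fix n
    have "(\<integral>x. - real_of_ereal (g2 x) \<partial>M) \<le> (\<integral>x. real_of_ereal (h2 n x) \<partial>M)"
    proof (rule integral_mono_AE)
      show "integrable M (\<lambda>x. - real_of_ereal (g2 x))" using G2(1) by simp
      show "AE x in M. - real_of_ereal (g2 x) \<le> real_of_ereal (h2 n x)"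
        using G2(2) H2(2)[of n] by eventually_elim (rule rle2[OF negle2[OF g2h]])
    qed (rule H2(1))
    also have "\<dots> < - c + 1 / real (Suc n)" using l2[of n] H2(3)[of n] by simp
    finally show "- (\<integral>x. real_of_ereal (g2 x) \<partial>M) < - c + 1 / real (Suc n)" by simp
  qed
  have ae21: "AE x in M. real_of_ereal (g2 x) \<le> real_of_ereal (g1 x)"
    using G1(2) G2(2) AE_space
  proof eventually_elim
    case (elim x)
    then have "g2 x \<le> g1 x" using g1f g2f order.trans by blast
    then show ?case using elim by (intro rle) auto
  qed
  have "(\<integral>x. real_of_ereal (g1 x) - real_of_ereal (g2 x) \<partial>M) = 0"
  proof -
    have "(\<integral>x. real_of_ereal (g1 x) - real_of_ereal (g2 x) \<partial>M) \<le> 0"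
      using i1 i2 G1(1) G2(1) by simp
    moreover have "(\<integral>x. real_of_ereal (g1 x) - real_of_ereal (g2 x) \<partial>M) \<ge> 0"
      using ae21 by (intro integral_nonneg_AE) (auto elim: eventually_mono)
    ultimately show ?thesis by simp
  qed
  then have "AE x in M. real_of_ereal (g1 x) - real_of_ereal (g2 x) = 0"
    using ae21 G1(1) G2(1) by (subst (asm) integral_nonneg_eq_0_iff_AE) (auto elim: eventually_mono)
  then have aef: "AE x in M. f x = real_of_ereal (g1 x)"
    using G1(2) G2(2) AE_space
  proof (eventually_elim)
    case (elim x)
    have xs: "x \<in> space M" using elim by blast
    show ?case by (rule rle3[OF g2f[OF xs] g1f[OF xs]]) (use elim in blast)+
  qed
  have fm: "f \<in> borel_measurable (completion M)"
    by (rule compl_meas[OF _ aef]) (use G1(1) in auto)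
  have aefc: "AE x in completion M. f x = real_of_ereal (g1 x)" using aef by (rule AE_completion)
  have ic: "integrable (completion M) (\<lambda>x. real_of_ereal (g1 x))"
    using G1(1) integrable_completion[of "\<lambda>x. real_of_ereal (g1 x)" M] by auto
  have "integrable (completion M) f"
    using ic aefc fm by (subst integrable_cong_AE[OF fm _ aefc]) auto
  moreover have "(\<integral>x. f x \<partial>completion M) = c"
  proof -
    have "(\<integral>x. f x \<partial>completion M) = (\<integral>x. real_of_ereal (g1 x) \<partial>completion M)"
      by (rule integral_cong_AE[OF fm _ aefc]) (use G1(1) in \<open>auto intro: measurable_completion\<close>)
    also have "\<dots> = (\<integral>x. real_of_ereal (g1 x) \<partial>M)"
      by (rule integral_completion) (use G1(1) in auto)
    also have "\<dots> = c" using i1 i2 \<open>(\<integral>x. real_of_ereal (g1 x) - real_of_ereal (g2 x) \<partial>M) = 0\<close> G1(1) G2(1)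
      by simp
    finally show ?thesis .
  qed
  ultimately show ?thesis by blast
qed

lemma E_completion:
  "E_ext (completion Q) h = E_ext Q h" "E_exists (completion Q) h = E_exists Q h"
  unfolding E_ext_def E_exists_def Epos_def Eneg_def nn_integral_completion by simp_all

lemma outer_le:
  assumes Q: "Q \<in> M0 TS"
  shows "outer_exp TS Q f \<le> sigma_bar TS f"
  unfolding sigma_bar_def
proof (rule Inf_greatest)
  fix x assume "x \<in> {endowment V | V N H. gen_portfolio TS V N H \<and> superhedges TS V N H f}"
  then obtain V N H where x: "x = endowment V" and gp: "gen_portfolio TS V N H" and sh: "superhedges TS V N H f"
    by blast
  obtain h where hm: "h \<in> borel_measurable Q" and hf: "\<forall>S\<in>TS. f S \<le> h S"
    and ex: "E_exists Q h" and le: "E_ext Q h \<le> endowment V"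
    using lemmaA[OF Q gp sh] by blast
  have hc: "h \<in> borel_measurable (completion Q)" using hm by (rule measurable_completion)
  have "outer_exp TS Q f \<le> E_ext (completion Q) h"
    unfolding outer_exp_def
    by (rule Inf_lower) (use hc hf ex in \<open>auto simp: E_completion\<close>)
  also have "\<dots> \<le> x" using le x by (simp add: E_completion)
  finally show "outer_exp TS Q f \<le> x" .
qed

lemma pos0:
  assumes Q: "Q \<in> M0 TS"
  shows "0 \<le> outer_exp TS Q (\<lambda>_. 0)"
  unfolding outer_exp_def
proof (rule Inf_greatest)
  have mm: "martingale_measure TS Q" using Q unfolding M0_def by auto
  have sQ: "space Q = TS" by (rule mm_facts(3)[OF mm])
  fix x assume "x \<in> {E_ext (completion Q) h | h. h \<in> borel_measurable (completion Q) \<and> (\<forall>S\<in>TS. (0::ereal) \<le> h S) \<and> E_exists (completion Q) h}"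
  then obtain h where x: "x = E_ext (completion Q) h" and h0: "\<forall>S\<in>TS. 0 \<le> h S" by blast
  have "Eneg (completion Q) h = (\<integral>\<^sup>+S. 0 \<partial>completion Q)"
    unfolding Eneg_def
  proof (rule nn_integral_cong)
    fix S assume "S \<in> space (completion Q)"
    then have "0 \<le> h S" using h0 sQ by simp
    then show "e2ennreal (max 0 (- h S)) = 0" by (simp add: max_def e2ennreal_neg)
  qed
  then have "Eneg (completion Q) h = 0" by simp
  then show "0 \<le> x" unfolding x E_ext_def by (simp add: zero_ennreal.rep_eq)
qed

lemma exists_h:
  assumes Q: "Q \<in> M0 TS" and lt: "sigma_bar TS g < a"
  shows "\<exists>h. h \<in> borel_measurable Q \<and> (\<forall>S\<in>TS. g S \<le> h S) \<and> E_exists Q h \<and> E_ext Q h < a"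
proof -
  obtain x where "x \<in> {endowment V | V N H. gen_portfolio TS V N H \<and> superhedges TS V N H g}" and xa: "x < a"
    using lt unfolding sigma_bar_def Inf_less_iff by blast
  then obtain V N H where x: "x = endowment V" and gp: "gen_portfolio TS V N H" and sh: "superhedges TS V N H g"
    by blast
  obtain h where "h \<in> borel_measurable Q" "\<forall>S\<in>TS. g S \<le> h S" "E_exists Q h" and le: "E_ext Q h \<le> endowment V"
    using lemmaA[OF Q gp sh] by blast
  moreover have "E_ext Q h < a" using le x xa by simp
  ultimately show ?thesis by blast
qed

lemma ereal_le_abs: "(a::ereal) \<le> \<bar>a\<bar>"
  by (cases a) auto

theorem theorem6p2:
  fixes s0 :: real and TS :: "traj set"
  assumes traj: "\<forall>S\<in>TS. S 0 = s0"
    and nonempty: "M0 TS \<noteq> {}"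
  shows "sigma_bar TS (\<lambda>_. 0) \<ge> 0
    \<and> (\<forall>f :: traj \<Rightarrow> ereal.
          (SUP Q\<in>M0 TS. outer_exp TS Q f) \<le> sigma_bar TS f \<and> sigma_bar TS f \<le> normK TS f)
    \<and> (\<forall>Q\<in>M0 TS. \<forall>f\<in>L1K TS.
          integrable (completion Q) f \<and> intK TS f = ereal (\<integral>S. f S \<partial>completion Q))"
proof -
  obtain Q0 where Q0: "Q0 \<in> M0 TS" using nonempty by blast
  have P0: "sigma_bar TS (\<lambda>_. 0) \<ge> 0"
    using pos0[OF Q0] outer_le[OF Q0, of "\<lambda>_. 0"] by (rule order.trans)
  have P1: "(SUP Q\<in>M0 TS. outer_exp TS Q f) \<le> sigma_bar TS f" for f
    by (rule SUP_least) (rule outer_le)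
  have P2: "sigma_bar TS f \<le> normK TS f" for f
    unfolding normK_def I_bar_def sigma_bar_def
  proof (rule Inf_superset_mono)
    show "{endowment V |V N H. pos_gen_portfolio TS V N H \<and> superhedges TS V N H (\<lambda>S. \<bar>f S\<bar>)}
      \<subseteq> {endowment V |V N H. gen_portfolio TS V N H \<and> superhedges TS V N H f}"
    proof
      fix x assume "x \<in> {endowment V |V N H. pos_gen_portfolio TS V N H \<and> superhedges TS V N H (\<lambda>S. \<bar>f S\<bar>)}"
      then obtain V N H where x: "x = endowment V" and pgp: "pos_gen_portfolio TS V N H"
        and sh: "superhedges TS V N H (\<lambda>S. \<bar>f S\<bar>)" by blast
      have gp: "gen_portfolio TS V N H" using pgp unfolding pos_gen_portfolio_def by blast
      have "superhedges TS V N H f"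
        unfolding superhedges_def
      proof
        fix S assume "S \<in> TS"
        then have "\<bar>f S\<bar> \<le> gp_value V N H S" using sh unfolding superhedges_def by blast
        then show "f S \<le> gp_value V N H S" by (rule order.trans[OF ereal_le_abs])
      qed
      then show "x \<in> {endowment V |V N H. gen_portfolio TS V N H \<and> superhedges TS V N H f}"
        using x gp by blast
    qed
  qed
  have P3: "integrable (completion Q) f \<and> intK TS f = ereal (\<integral>S. f S \<partial>completion Q)"
    if Q: "Q \<in> M0 TS" and f: "f \<in> L1K TS" for Q f
  proof -
    have mm: "martingale_measure TS Q" using Q unfolding M0_def by auto
    have sQ: "space Q = TS" by (rule mm_facts(3)[OF mm])
    have eq: "- sigma_bar TS (\<lambda>S. - ereal (f S)) = sigma_bar TS (\<lambda>S. ereal (f S))"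
      and fin: "\<bar>sigma_bar TS (\<lambda>S. ereal (f S))\<bar> \<noteq> \<infinity>"
      using f unfolding L1K_def by auto
    obtain c where c: "sigma_bar TS (\<lambda>S. ereal (f S)) = ereal c"
      using fin by (cases "sigma_bar TS (\<lambda>S. ereal (f S))") auto
    have c': "sigma_bar TS (\<lambda>S. - ereal (f S)) = ereal (- c)"
      using arg_cong[OF eq, of uminus] c by simp
    have "\<forall>n. \<exists>h. h \<in> borel_measurable Q \<and> (\<forall>S\<in>TS. ereal (f S) \<le> h S) \<and> E_exists Q h \<and> E_ext Q h < ereal (c + 1 / real (Suc n))"
      using exists_h[OF Q] c by simp
    then have "\<exists>h1. \<forall>n. h1 n \<in> borel_measurable Q \<and> (\<forall>S\<in>TS. ereal (f S) \<le> h1 n S) \<and> E_exists Q (h1 n) \<and> E_ext Q (h1 n) < ereal (c + 1 / real (Suc n))"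
      by (rule choice)
    then obtain h1 where h1: "\<forall>n. h1 n \<in> borel_measurable Q \<and> (\<forall>S\<in>TS. ereal (f S) \<le> h1 n S) \<and> E_exists Q (h1 n) \<and> E_ext Q (h1 n) < ereal (c + 1 / real (Suc n))"
      by (elim exE)
    have "\<forall>n. \<exists>h. h \<in> borel_measurable Q \<and> (\<forall>S\<in>TS. - ereal (f S) \<le> h S) \<and> E_exists Q h \<and> E_ext Q h < ereal (- c + 1 / real (Suc n))"
      using exists_h[OF Q] c' by simp
    then have "\<exists>h2. \<forall>n. h2 n \<in> borel_measurable Q \<and> (\<forall>S\<in>TS. - ereal (f S) \<le> h2 n S) \<and> E_exists Q (h2 n) \<and> E_ext Q (h2 n) < ereal (- c + 1 / real (Suc n))"
      by (rule choice)
    then obtain h2 where h2: "\<forall>n. h2 n \<in> borel_measurable Q \<and> (\<forall>S\<in>TS. - ereal (f S) \<le> h2 n S) \<and> E_exists Q (h2 n) \<and> E_ext Q (h2 n) < ereal (- c + 1 / real (Suc n))"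
      by (elim exE)
    have "integrable (completion Q) f \<and> (\<integral>x. f x \<partial>completion Q) = c"
    proof (rule sandwich[of h1 Q h2])
      fix n
      show "h1 n \<in> borel_measurable Q" "h2 n \<in> borel_measurable Q" "E_exists Q (h1 n)" "E_exists Q (h2 n)"
        "E_ext Q (h1 n) < ereal (c + 1 / real (Suc n))" "E_ext Q (h2 n) < ereal (- c + 1 / real (Suc n))"
        using h1 h2 by blast+
      fix x assume "x \<in> space Q"
      then have "x \<in> TS" using sQ by simp
      then show "ereal (f x) \<le> h1 n x" "- ereal (f x) \<le> h2 n x" using h1 h2 by blast+
    qed
    then show ?thesis unfolding intK_def c by simp
  qed
  show ?thesis using P0 P1 P2 P3 by blast
qed

end
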